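(* Let $m\ge1$, $n=2^m-1$ and $\iota\in\dot F^m$. For every $\bar z\in F^n$ it holds that $\Omega(R_\iota+\bar z)=\Omega(R_\iota+\bar z+\bar e^{(\iota)})$.
   Context: $F^m$ denotes the vector space of binary $m$-tuples over $GF(2)$, and $\dot F^m := F^m\setminus\{0^m\}$. The coordinates of words $\bar w\in F^n$ ($n=2^m-1$) are indexed by the elements of $\dot F^m$, $\bar w=\{w_\alpha\}_{\alpha\in\dot F^m}$ (in some fixed order). $\bar e^{(\iota)}\in F^n$ is the word with a single $1$ in the coordinate indexed by $\iota$. The Hamming code is $H:=\{\bar c\in F^n \mid \sum_{\alpha\in\dot F^m} c_\alpha\alpha = 0^m\}$. For $\iota\in\dot F^m$, $R_\iota := \{\bar c\in H \mid c_\alpha=c_{\alpha+\iota} \text{ for all } \alpha\in F^m\setminus\{0^m,\iota\}\}$. For $M\subset F^n$, $\Omega(M)$ is the set of words at Hamming distance at most $1$ from some element of $M$. *)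

theory Defs
  imports "HOL-Analysis.Finite_Cartesian_Product" "HOL-Library.Z2"
begin

text \<open>F^m is modelled as bit ^ 'm (m = CARD('m) >= 1). A word of F^n, n = 2^m - 1,
  indexed by the nonzero elements of F^m, is a function (bit ^ 'm) => bit whose value
  at the zero vector is 0 (a dummy coordinate).\<close>

type_synonym 'm word = "bit ^ 'm \<Rightarrow> bit"

definition words :: "'m::finite word set" where
  "words = {w. w 0 = 0}"

definition word_add :: "'m::finite word \<Rightarrow> 'm word \<Rightarrow> 'm word" where
  "word_add w v = (\<lambda>\<alpha>. w \<alpha> + v \<alpha>)"

definition unit_word :: "bit ^ 'm::finite \<Rightarrow> 'm word" where
  "unit_word \<iota> = (\<lambda>\<alpha>. if \<alpha> = \<iota> then 1 else 0)"

definition hamming_dist :: "'m::finite word \<Rightarrow> 'm word \<Rightarrow> nat" where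
  "hamming_dist w v = card {\<alpha>. \<alpha> \<noteq> 0 \<and> w \<alpha> \<noteq> v \<alpha>}"

definition hamming_code :: "'m::finite word set" where
  "hamming_code = {c \<in> words. (\<Sum>\<alpha>\<in>UNIV - {0}. c \<alpha> *s \<alpha>) = 0}"

definition R_code :: "bit ^ 'm::finite \<Rightarrow> 'm word set" where
  "R_code \<iota> = {c \<in> hamming_code. \<forall>\<alpha>. \<alpha> \<noteq> 0 \<and> \<alpha> \<noteq> \<iota> \<longrightarrow> c \<alpha> = c (\<alpha> + \<iota>)}"

definition translate :: "'m::finite word set \<Rightarrow> 'm word \<Rightarrow> 'm word set" where
  "translate M z = (\<lambda>c. word_add c z) ` M"

definition Omega :: "'m::finite word set \<Rightarrow> 'm word set" where
  "Omega M = {w \<in> words. \<exists>c\<in>M. hamming_dist w c \<le> 1}"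

end

theory Submission
  imports Defs
begin

instance bit :: finite
proof
  have "(UNIV :: bit set) = {0, 1}" using bit.exhaust by auto
  then show "finite (UNIV :: bit set)" by (metis finite.emptyI finite.insertI)
qed
lemma bit_self_add[simp]: "(x::bit) + x = 0"
  by (cases x) auto
lemma bit_ne_add1: "(a::bit) \<noteq> b \<Longrightarrow> a = b + 1"
  by (cases a; cases b) auto
declare add_bit_eq_xor [simp del] mult_bit_eq_and [simp del]
lemma vec_self_add[simp]: "(x::bit^'m) + x = 0"
  by (simp add: vec_eq_iff)
lemma vec_add_eq_iff: "((a::bit^'m) + b = c) \<longleftrightarrow> a = c + b"
proof
  assume "a + b = c" then have "a + b + b = c + b" by simp
  then show "a = c + b" by (simp add: add.assoc)
next
  assume "a = c + b" then show "a + b = c" by (simp add: add.assoc)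
qed

lemma hd_le1:
  "hamming_dist w v \<le> 1 \<longleftrightarrow> (\<exists>\<beta>. \<forall>\<alpha>. \<alpha> \<noteq> 0 \<and> \<alpha> \<noteq> \<beta> \<longrightarrow> w \<alpha> = v \<alpha>)"
proof
  let ?S = "{\<alpha>. \<alpha> \<noteq> 0 \<and> w \<alpha> \<noteq> v \<alpha>}"
  assume h: "hamming_dist w v \<le> 1"
  have fin: "finite ?S" by simp
  show "\<exists>\<beta>. \<forall>\<alpha>. \<alpha> \<noteq> 0 \<and> \<alpha> \<noteq> \<beta> \<longrightarrow> w \<alpha> = v \<alpha>"
  proof (cases "?S = {}")
    case True then show ?thesis by blast
  next
    case False
    then obtain \<beta> where "\<beta> \<in> ?S" by blast
    moreover have "card ?S \<le> 1" using h by (simp add: hamming_dist_def)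
    moreover have "\<forall>a\<in>?S. \<forall>b\<in>?S. a = b"
      using card_le_Suc0_iff_eq[OF fin] \<open>card ?S \<le> 1\<close> by simp
    ultimately have "?S = {\<beta>}" by blast
    then show ?thesis by blast
  qed
next
  assume "\<exists>\<beta>. \<forall>\<alpha>. \<alpha> \<noteq> 0 \<and> \<alpha> \<noteq> \<beta> \<longrightarrow> w \<alpha> = v \<alpha>"
  then obtain \<beta> where b: "\<forall>\<alpha>. \<alpha> \<noteq> 0 \<and> \<alpha> \<noteq> \<beta> \<longrightarrow> w \<alpha> = v \<alpha>" by blast
  have "{\<alpha>. \<alpha> \<noteq> 0 \<and> w \<alpha> \<noteq> v \<alpha>} \<subseteq> {\<beta>}" using b by blast
  then have "card {\<alpha>. \<alpha> \<noteq> 0 \<and> w \<alpha> \<noteq> v \<alpha>} \<le> card {\<beta>}" by (intro card_mono) auto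
  then show "hamming_dist w v \<le> 1" by (simp add: hamming_dist_def)
qed

lemma flip_in_R:
  fixes \<iota> \<beta> :: "bit ^ 'm::finite"
  assumes c: "c \<in> R_code \<iota>" and i0: "\<iota> \<noteq> 0" and b0: "\<beta> \<noteq> 0" and bi: "\<beta> \<noteq> \<iota>"
  shows "(\<lambda>\<alpha>. c \<alpha> + unit_word \<beta> \<alpha> + unit_word (\<beta> + \<iota>) \<alpha> + unit_word \<iota> \<alpha>) \<in> R_code \<iota>"
    (is "?c \<in> _")
proof -
  have bi0: "\<beta> + \<iota> \<noteq> 0" using bi vec_add_eq_iff[of \<beta> \<iota> 0] by simp
  have cw: "c 0 = 0" and cs: "(\<Sum>\<alpha>\<in>UNIV - {0}. c \<alpha> *s \<alpha>) = 0"
    and cp: "\<forall>\<alpha>. \<alpha> \<noteq> 0 \<and> \<alpha> \<noteq> \<iota> \<longrightarrow> c \<alpha> = c (\<alpha> + \<iota>)"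
    using c by (auto simp: R_code_def hamming_code_def words_def)
  have w: "?c \<in> words" using cw b0 bi0 i0 by (simp add: words_def unit_word_def)
  have dl: "\<And>\<gamma>::bit^'m. \<gamma> \<noteq> 0 \<Longrightarrow> (\<Sum>\<alpha>\<in>UNIV - {0}. unit_word \<gamma> \<alpha> *s \<alpha>) = \<gamma>"
  proof -
    fix \<gamma> :: "bit^'m" assume "\<gamma> \<noteq> 0"
    have "(\<Sum>\<alpha>\<in>UNIV - {0}. unit_word \<gamma> \<alpha> *s \<alpha>) = (\<Sum>\<alpha>\<in>UNIV - {0}. if \<alpha> = \<gamma> then \<alpha> else 0)"
      by (intro sum.cong) (auto simp: unit_word_def)
    also have "\<dots> = \<gamma>" using \<open>\<gamma> \<noteq> 0\<close> by (simp add: sum.delta')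
    finally show "(\<Sum>\<alpha>\<in>UNIV - {0}. unit_word \<gamma> \<alpha> *s \<alpha>) = \<gamma>" .
  qed
  have "(\<Sum>\<alpha>\<in>UNIV - {0}. ?c \<alpha> *s \<alpha>) =
        (\<Sum>\<alpha>\<in>UNIV - {0}. c \<alpha> *s \<alpha>) + (\<Sum>\<alpha>\<in>UNIV - {0}. unit_word \<beta> \<alpha> *s \<alpha>)
        + (\<Sum>\<alpha>\<in>UNIV - {0}. unit_word (\<beta> + \<iota>) \<alpha> *s \<alpha>) + (\<Sum>\<alpha>\<in>UNIV - {0}. unit_word \<iota> \<alpha> *s \<alpha>)"
    by (simp add: vector_sadd_rdistrib sum.distrib)
  also have "\<dots> = \<beta> + (\<beta> + \<iota>) + \<iota>" using cs dl b0 bi0 i0 by simp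
  also have "\<dots> = 0" by (simp add: add.assoc[symmetric])
  finally have s: "(\<Sum>\<alpha>\<in>UNIV - {0}. ?c \<alpha> *s \<alpha>) = 0" .
  have p: "\<forall>\<alpha>. \<alpha> \<noteq> 0 \<and> \<alpha> \<noteq> \<iota> \<longrightarrow> ?c \<alpha> = ?c (\<alpha> + \<iota>)"
  proof (intro allI impI)
    fix \<alpha> :: "bit^'m" assume a: "\<alpha> \<noteq> 0 \<and> \<alpha> \<noteq> \<iota>"
    have e1: "(\<alpha> + \<iota> = \<beta>) = (\<alpha> = \<beta> + \<iota>)" by (rule vec_add_eq_iff)
    have e2: "(\<alpha> + \<iota> = \<beta> + \<iota>) = (\<alpha> = \<beta>)" by (simp add: vec_add_eq_iff add.assoc)
    have e3: "(\<alpha> + \<iota> = \<iota>) = False" using a vec_add_eq_iff[of \<alpha> \<iota> \<iota>] by simp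
    show "?c \<alpha> = ?c (\<alpha> + \<iota>)" using a cp e1 e2 e3
      by (auto simp: unit_word_def add.assoc add.commute add.left_commute)
  qed
  show ?thesis using w s p by (simp add: R_code_def hamming_code_def)
qed



lemma incl:
  fixes \<iota> :: "bit ^ 'm::finite" and z :: "'m word"
  assumes i0: "\<iota> \<noteq> 0"
  shows "Omega (translate (R_code \<iota>) z) \<subseteq> Omega (translate (R_code \<iota>) (word_add z (unit_word \<iota>)))"
proof
  fix w assume "w \<in> Omega (translate (R_code \<iota>) z)"
  then obtain c where ww: "w \<in> words" and c: "c \<in> R_code \<iota>"
    and h: "hamming_dist w (word_add c z) \<le> 1"
    unfolding Omega_def translate_def by blast
  from h obtain \<beta> where "\<forall>\<alpha>. \<alpha> \<noteq> 0 \<and> \<alpha> \<noteq> \<beta> \<longrightarrow> w \<alpha> = word_add c z \<alpha>"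
    unfolding hd_le1 by blast
  then have b: "\<forall>\<alpha>. \<alpha> \<noteq> 0 \<and> \<alpha> \<noteq> \<beta> \<longrightarrow> w \<alpha> = c \<alpha> + z \<alpha>"
    by (simp add: word_add_def)
  have goal: "\<exists>c'\<in>R_code \<iota>. \<exists>\<gamma>. \<forall>\<alpha>. \<alpha> \<noteq> 0 \<and> \<alpha> \<noteq> \<gamma> \<longrightarrow> w \<alpha> = c' \<alpha> + (z \<alpha> + unit_word \<iota> \<alpha>)"
  proof (cases "\<forall>\<alpha>. \<alpha> \<noteq> 0 \<and> \<alpha> \<noteq> \<iota> \<longrightarrow> w \<alpha> = c \<alpha> + z \<alpha>")
    case True
    have "\<forall>\<alpha>. \<alpha> \<noteq> 0 \<and> \<alpha> \<noteq> \<iota> \<longrightarrow> w \<alpha> = c \<alpha> + (z \<alpha> + unit_word \<iota> \<alpha>)"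
      using True by (simp add: unit_word_def)
    then show ?thesis using c by blast
  next
    case False
    then obtain \<delta> where d: "\<delta> \<noteq> 0" "\<delta> \<noteq> \<iota>" "w \<delta> \<noteq> c \<delta> + z \<delta>" by blast
    with b have db: "\<delta> = \<beta>" by blast
    have wd: "w \<delta> = c \<delta> + z \<delta> + 1" using d(3) by (rule bit_ne_add1)
    have bi0: "\<delta> + \<iota> \<noteq> 0" using d vec_add_eq_iff[of \<delta> \<iota> 0] by simp
    have bi1: "\<delta> + \<iota> \<noteq> \<delta>" proof
      assume "\<delta> + \<iota> = \<delta>"
      then have "\<delta> + (\<delta> + \<iota>) = \<delta> + \<delta>" by simp
      then have "\<iota> = 0" by (simp add: add.assoc[symmetric])
      with i0 show False by simp
    qed
    let ?c = "\<lambda>\<alpha>. c \<alpha> + unit_word \<delta> \<alpha> + unit_word (\<delta> + \<iota>) \<alpha> + unit_word \<iota> \<alpha>"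
    have cR: "?c \<in> R_code \<iota>" using flip_in_R[OF c i0 d(1) d(2)] .
    have allp: "\<forall>\<alpha>. \<alpha> \<noteq> 0 \<and> \<alpha> \<noteq> \<delta> + \<iota> \<longrightarrow> w \<alpha> = ?c \<alpha> + (z \<alpha> + unit_word \<iota> \<alpha>)"
    proof (intro allI impI)
      fix \<alpha> :: "bit^'m" assume a: "\<alpha> \<noteq> 0 \<and> \<alpha> \<noteq> \<delta> + \<iota>"
      show "w \<alpha> = ?c \<alpha> + (z \<alpha> + unit_word \<iota> \<alpha>)"
      proof (cases "\<alpha> = \<delta>")
        case True
        have u1: "unit_word \<delta> \<alpha> = 1" "unit_word (\<delta> + \<iota>) \<alpha> = 0" "unit_word \<iota> \<alpha> = 0"
          using True bi1 d(2) by (auto simp: unit_word_def)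
        have "w \<alpha> = c \<alpha> + z \<alpha> + 1" using wd True by simp
        also have "\<dots> = c \<alpha> + 1 + 0 + 0 + (z \<alpha> + 0)" by (simp add: ac_simps)
        finally show ?thesis by (simp only: u1)
      next
        case False
        then have wa: "w \<alpha> = c \<alpha> + z \<alpha>" using b a db by blast
        have u1: "unit_word \<delta> \<alpha> = 0" "unit_word (\<delta> + \<iota>) \<alpha> = 0"
          using False a by (auto simp: unit_word_def)
        have "c \<alpha> + 0 + 0 + unit_word \<iota> \<alpha> + (z \<alpha> + unit_word \<iota> \<alpha>) = c \<alpha> + z \<alpha> + (unit_word \<iota> \<alpha> + unit_word \<iota> \<alpha>)"
          by (simp add: ac_simps del: bit_self_add)
        also have "\<dots> = c \<alpha> + z \<alpha>" by (simp only: bit_self_add add_0_right)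
        finally show ?thesis by (simp only: u1 \<open>w \<alpha> = c \<alpha> + z \<alpha>\<close>)
      qed
    qed
    have ex: "\<exists>\<gamma>. \<forall>\<alpha>. \<alpha> \<noteq> 0 \<and> \<alpha> \<noteq> \<gamma> \<longrightarrow> w \<alpha> = ?c \<alpha> + (z \<alpha> + unit_word \<iota> \<alpha>)"
      by (rule exI[of _ "\<delta> + \<iota>"]) (rule allp)
    show ?thesis
    proof (rule bexI[where x="?c"])
      show "?c \<in> R_code \<iota>" by (rule cR)
      show "\<exists>\<gamma>. \<forall>\<alpha>. \<alpha> \<noteq> 0 \<and> \<alpha> \<noteq> \<gamma> \<longrightarrow> w \<alpha> = ?c \<alpha> + (z \<alpha> + unit_word \<iota> \<alpha>)" by (rule ex)
    qed
  qed
  then obtain c' \<gamma> where c': "c' \<in> R_code \<iota>" and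
    g0: "\<forall>\<alpha>. \<alpha> \<noteq> 0 \<and> \<alpha> \<noteq> \<gamma> \<longrightarrow> w \<alpha> = c' \<alpha> + (z \<alpha> + unit_word \<iota> \<alpha>)"
    by blast
  have g: "\<forall>\<alpha>. \<alpha> \<noteq> 0 \<and> \<alpha> \<noteq> \<gamma> \<longrightarrow> w \<alpha> = word_add c' (word_add z (unit_word \<iota>)) \<alpha>"
    using g0 unfolding word_add_def by (simp only:)
  have "hamming_dist w (word_add c' (word_add z (unit_word \<iota>))) \<le> 1"
    unfolding hd_le1 using g by blast
  moreover have "word_add c' (word_add z (unit_word \<iota>)) \<in> translate (R_code \<iota>) (word_add z (unit_word \<iota>))"
    unfolding translate_def using c' by (rule imageI)
  ultimately show "w \<in> Omega (translate (R_code \<iota>) (word_add z (unit_word \<iota>)))"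
    using ww unfolding Omega_def by blast
qed

theorem lemma1:
  fixes \<iota> :: "bit ^ 'm::finite" and z :: "'m word"
  assumes "\<iota> \<noteq> 0" and "z \<in> words"
  shows "Omega (translate (R_code \<iota>) z) = Omega (translate (R_code \<iota>) (word_add z (unit_word \<iota>)))"
proof
  show "Omega (translate (R_code \<iota>) z) \<subseteq> Omega (translate (R_code \<iota>) (word_add z (unit_word \<iota>)))"
    using incl[OF assms(1)] .
  have "word_add (word_add z (unit_word \<iota>)) (unit_word \<iota>) = z"
    by (simp add: word_add_def add.assoc)
  then show "Omega (translate (R_code \<iota>) (word_add z (unit_word \<iota>))) \<subseteq> Omega (translate (R_code \<iota>) z)"
    using incl[OF assms(1), of "word_add z (unit_word \<iota>)"] by simp
qed

end
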